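(* Let $R$ be a $*$-reducing ring and let $p,q\in R$ be projections. Then the following are equivalent: (1) $(1-p)(1-q)$ is MP invertible; (2) $1-p-q$ is MP invertible; (3) $pq$ is MP invertible.
   Context: $R$ is an associative ring with identity $1$ and an involution $a\mapsto a^*$ (satisfying $(a^* )^*=a$, $(a+b)^*=a^*+b^*$, $(ab)^*=b^*a^*$). $R$ is $*$-reducing if $a^*a=0$ implies $a=0$ for all $a\in R$. An element $a$ is MP invertible if there is $b$ with $aba=a$, $bab=b$, $(ab)^*=ab$, $(ba)^*=ba$. A projection is an element $p$ with $p^2=p=p^*$. *)

theory Defs
  imports Main
begin

definition involution :: "('a::ring_1 \<Rightarrow> 'a) \<Rightarrow> bool" where
  "involution st \<longleftrightarrow>
     (\<forall>a. st (st a) = a) \<and> (\<forall>a b. st (a + b) = st a + st b) \<and>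
     (\<forall>a b. st (a * b) = st b * st a)"

definition star_reducing :: "('a::ring_1 \<Rightarrow> 'a) \<Rightarrow> bool" where
  "star_reducing st \<longleftrightarrow> (\<forall>a. st a * a = 0 \<longrightarrow> a = 0)"

definition MP_invertible :: "('a::ring_1 \<Rightarrow> 'a) \<Rightarrow> 'a \<Rightarrow> bool" where
  "MP_invertible st a \<longleftrightarrow>
     (\<exists>b. a * b * a = a \<and> b * a * b = b \<and> st (a * b) = a * b \<and> st (b * a) = b * a)"

definition projection :: "('a::ring_1 \<Rightarrow> 'a) \<Rightarrow> 'a \<Rightarrow> bool" where
  "projection st p \<longleftrightarrow> p * p = p \<and> st p = p"

end

theory Submission
  imports Defs
begin

lemma inv_facts:
  fixes st :: "'a::ring_1 \<Rightarrow> 'a"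
  assumes "involution st"
  shows "st (st a) = a" "st (a + b) = st a + st b" "st (a * b) = st b * st a"
    "st 0 = 0" "st 1 = 1" "st (- a) = - st a" "st (a - b) = st a - st b"
proof -
  have i: "\<And>a. st (st a) = a" and ad: "\<And>a b. st (a + b) = st a + st b"
    and m: "\<And>a b. st (a * b) = st b * st a" using assms unfolding involution_def by auto
  show "st (st a) = a" "st (a + b) = st a + st b" "st (a * b) = st b * st a" using i ad m by auto
  have z: "st 0 = 0" using ad[of 0 0] by simp
  show "st 0 = 0" by (rule z)
  have "st (st 1 * 1) = st 1 * st (st 1)" by (rule m)
  then show "st 1 = 1" using i by simp
  have n: "\<And>a. st (- a) = - st a"
  proof -
    fix a have "st (a + - a) = st a + st (- a)" by (rule ad)
    then have "0 = st a + st (- a)" using z by simp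
    then show "st (- a) = - st a" by (simp add: eq_neg_iff_add_eq_0 add.commute)
  qed
  show "st (- a) = - st a" by (rule n)
  show "st (a - b) = st a - st b" using ad[of a "- b"] n[of b] by simp
qed

lemma MP_neg:
  fixes st :: "'a::ring_1 \<Rightarrow> 'a"
  assumes "involution st" and "MP_invertible st x"
  shows "MP_invertible st (- x)"
proof -
  obtain b where "x * b * x = x" "b * x * b = b" "st (x * b) = x * b" "st (b * x) = b * x"
    using assms(2) unfolding MP_invertible_def by blast
  then show ?thesis unfolding MP_invertible_def
    by (intro exI[of _ "- b"]) simp
qed

lemma MP_neg_iff:
  fixes st :: "'a::ring_1 \<Rightarrow> 'a"
  assumes "involution st"
  shows "MP_invertible st (- x) \<longleftrightarrow> MP_invertible st x"
  using MP_neg[OF assms, of x] MP_neg[OF assms, of "- x"] by auto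

lemma proj_mult:
  fixes p :: "'a::ring_1"
  assumes "p * p = p"
  shows "p * (p * x) = p * x"
  using assms by (metis mult.assoc)

lemma dir32:
  fixes st :: "'a::ring_1 \<Rightarrow> 'a" and p q :: 'a
  assumes I: "involution st"
    and P: "projection st p" and Q: "projection st q"
    and M: "MP_invertible st (p * q)"
  shows "MP_invertible st (1 - p - q)"
proof -
  note S = inv_facts[OF I]
  have pp: "p * p = p" and sp: "st p = p" using P unfolding projection_def by auto
  have qq: "q * q = q" and sq: "st q = q" using Q unfolding projection_def by auto
  obtain t where t1: "p * q * t * (p * q) = p * q" and t2: "t * (p * q) * t = t"
    and t3: "st (p * q * t) = p * q * t" and t4: "st (t * (p * q)) = t * (p * q)"
    using M unfolding MP_invertible_def by blast
  define c where "c = 1 - p - q"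
  define e where "e = p * q * t"
  define f where "f = t * p * q"
  have se: "st e = e" using t3 e_def by simp
  have sf: "st f = f" using t4 f_def by (simp add: mult.assoc)
  have sc: "st c = c" using S sp sq c_def by simp
  have fq: "f * q = f" unfolding f_def using qq by (simp add: mult.assoc)
  have qf: "q * f = f" using fq sf S(3)[of f q] sq by simp
  have pe: "p * e = e" unfolding e_def using pp by (simp add: mult.assoc[symmetric])
  have ep: "e * p = e" using pe se S(3)[of p e] sp by simp
  have te: "t * e = t" using t2 unfolding e_def by (simp add: mult.assoc)
  have ft: "f * t = t" using t2 unfolding f_def by (simp add: mult.assoc)
  have qt: "q * t = t" by (metis ft qf mult.assoc)
  have tp: "t * p = t" by (metis te ep mult.assoc)
  have tq: "t * q = f" unfolding f_def using tp by simp
  have ePQ: "e * (p * q) = p * q" using t1 e_def by simp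
  have PQf: "p * q * f = p * q" using t1 f_def by (simp add: mult.assoc)
  have qpe: "q * p * e = q * p"
  proof -
    have "st (e * (p * q)) = st (p * q)" using ePQ by simp
    then show ?thesis using S(3) se sp sq by (simp add: mult.assoc)
  qed
  have qe: "q * e = q * p" using qpe pe by (metis mult.assoc)
  have pf: "p * f = p * q" using PQf qf by (metis mult.assoc)
  have eq: "e * q = p * q" unfolding e_def using tq PQf by (simp add: mult.assoc)
  have fp: "f * p = q * p"
  proof -
    have "st (p * f) = st (p * q)" using pf by simp
    then show ?thesis using S(3) sf sp sq by simp
  qed
  have cc: "c * c = 1 - p - q + p * q + q * p"
    unfolding c_def by (simp add: algebra_simps pp qq proj_mult)
  have ce: "c * e = - (q * p)" unfolding c_def using pe qe by (simp add: algebra_simps)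
  have cf: "c * f = - (p * q)" unfolding c_def using qf pf by (simp add: algebra_simps)
  have ct: "c * t = - e" unfolding c_def e_def using qt by (simp add: algebra_simps mult.assoc[symmetric])
  have tc: "t * c = - f" unfolding c_def using tp tq by (simp add: algebra_simps)
  have cst: "c * st t = - f"
  proof -
    have "st (t * c) = st (- f)" using tc by simp
    then show ?thesis using S sc sf by simp
  qed
  have ec: "e * c = - (p * q)" unfolding c_def using ep eq by (simp add: algebra_simps)
  have ee: "e * e = e" unfolding e_def using t1 by (metis mult.assoc)
  have ef: "e * f = p * q" using qf eq PQf by (metis mult.assoc)
  have et: "e * t = e" using qt eq by (metis e_def mult.assoc)
  have est: "e * st t = st t"
  proof -
    have "st (t * e) = st t" using te by simp
    then show ?thesis using S se by simp
  qed
  have fc: "f * c = - (q * p)" unfolding c_def using fq fp by (simp add: algebra_simps)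
  have fe: "f * e = q * p"
  proof -
    have "st (e * f) = st (p * q)" using ef by simp
    then show ?thesis using S se sf sp sq by simp
  qed
  have ff: "f * f = f" unfolding f_def using t1 by (metis mult.assoc)
  have fst: "f * st t = f"
  proof -
    have "t * f = f" using qf tq ff by (metis mult.assoc)
    then have "st (t * f) = st f" by simp
    then show ?thesis using S sf by simp
  qed
  define b where "b = c + e + f - t - st t"
  have sb: "st b = b" unfolding b_def S(7) S(2) S(1) sc se sf by (simp add: algebra_simps)
  have cb: "c * b = c + e + f"
  proof -
    have "c * b = c * c + c * e + c * f - c * t - c * st t" unfolding b_def by (simp add: algebra_simps)
    also have "\<dots> = c + e + f" unfolding cc ce cf ct cst by (simp add: c_def)
    finally show ?thesis .
  qed
  have bc: "b * c = c + e + f"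
  proof -
    have "st (c * b) = b * c" using S sb sc by simp
    then show ?thesis using cb S sc se sf by simp
  qed
  have cbc: "c * b * c = c"
  proof -
    have "c * b * c = c * c + e * c + f * c" unfolding cb by (simp add: algebra_simps)
    also have "\<dots> = c" unfolding cc ec fc by (simp add: c_def)
    finally show ?thesis .
  qed
  have eb: "e * b = - st t"
  proof -
    have "e * b = e * c + e * e + e * f - e * t - e * st t" unfolding b_def by (simp add: algebra_simps)
    also have "\<dots> = - st t" unfolding ec ee ef et est by simp
    finally show ?thesis .
  qed
  have fb: "f * b = - t"
  proof -
    have "f * b = f * c + f * e + f * f - f * t - f * st t" unfolding b_def by (simp add: algebra_simps)
    also have "\<dots> = - t" unfolding fc fe ff ft fst by simp
    finally show ?thesis .
  qed
  have bcb: "b * c * b = b"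
  proof -
    have "b * c * b = c * b + e * b + f * b" unfolding bc by (simp add: algebra_simps)
    also have "\<dots> = b" unfolding cb eb fb by (simp add: b_def)
    finally show ?thesis .
  qed
  have s1: "st (c * b) = c * b" using cb S sc se sf by simp
  have s2: "st (b * c) = b * c" using bc S sc se sf by simp
  show ?thesis unfolding MP_invertible_def c_def[symmetric]
    using cbc bcb s1 s2 by blast
qed

lemma dir23:
  fixes st :: "'a::ring_1 \<Rightarrow> 'a" and p q :: 'a
  assumes I: "involution st"
    and P: "projection st p" and Q: "projection st q"
    and M: "MP_invertible st (1 - p - q)"
  shows "MP_invertible st (p * q)"
proof -
  note S = inv_facts[OF I]
  have pp: "p * p = p" and sp: "st p = p" using P unfolding projection_def by auto
  have qq: "q * q = q" and sq: "st q = q" using Q unfolding projection_def by auto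
  define c where "c = 1 - p - q"
  obtain b where b1: "c * b * c = c" and b2: "b * c * b = b"
    and b3: "st (c * b) = c * b" and b4: "st (b * c) = b * c"
    using M unfolding MP_invertible_def c_def by blast
  have sc: "st c = c" using S sp sq c_def by simp
  define E where "E = c * b"
  have sE: "st E = E" using b3 E_def by simp
  have E': "E = st b * c" using b3 S sc E_def by simp
  have F': "b * c = c * st b" using b4 S sc by simp
  have EF1: "E * (b * c) = b * c" unfolding F' E_def using b1 by (simp add: mult.assoc[symmetric])
  have EF2: "E * (b * c) = E" unfolding E' using b1 by (simp add: mult.assoc)
  have bcE: "b * c = E" using EF1 EF2 by simp
  have Ec: "E * c = c" using b1 E_def by simp
  have cE: "c * E = c" using b1 bcE by (metis mult.assoc)
  have Eb: "E * b = b" using b2 bcE by simp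
  have EE: "E * E = E" using Ec E_def by (metis mult.assoc)
  have ccbb: "c * c * (b * b) = E"
  proof -
    have "c * c * (b * b) = c * (c * b) * b" by (simp add: mult.assoc)
    also have "\<dots> = c * (b * c) * b" using bcE E_def by simp
    also have "\<dots> = E * E" unfolding E_def by (simp add: mult.assoc)
    finally show ?thesis using EE by simp
  qed
  have bbcc: "b * b * (c * c) = E"
  proof -
    have "b * b * (c * c) = b * (b * c) * c" by (simp add: mult.assoc)
    also have "\<dots> = b * (c * b) * c" using bcE E_def by simp
    also have "\<dots> = (b * c) * (b * c)" by (simp add: mult.assoc)
    finally show ?thesis using EE bcE by simp
  qed
  have cc: "c * c = 1 - p - q + p * q + q * p"
    unfolding c_def by (simp add: algebra_simps pp qq proj_mult)
  have comm: "x * (c * c) = c * c * x" if "x * x = x" "x = p \<or> x = q" for x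
  proof -
    have xx: "x * (x * y) = x * y" for y using that(1) by (metis mult.assoc)
    show ?thesis unfolding cc using that(2)
      by (auto simp: algebra_simps pp qq xx proj_mult)
  qed
  have commE: "x * E = E * x" if "x * x = x" "x = p \<or> x = q" for x
  proof -
    have "(1 - E) * x * E = (1 - E) * (x * (c * c)) * (b * b)"
      unfolding ccbb[symmetric] by (simp add: mult.assoc)
    also have "\<dots> = (1 - E) * c * (c * x * (b * b))" unfolding comm[OF that] by (simp add: mult.assoc)
    also have "\<dots> = 0" using Ec by (simp add: algebra_simps)
    finally have 1: "x * E = E * x * E" by (simp add: algebra_simps)
    have "E * x * (1 - E) = (b * b) * ((c * c) * x) * (1 - E)"
      unfolding bbcc[symmetric] by (simp add: mult.assoc)
    also have "\<dots> = (b * b * x * c) * (c * (1 - E))" unfolding comm[OF that, symmetric] by (simp add: mult.assoc)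
    also have "\<dots> = 0" using cE by (simp add: algebra_simps)
    finally have 2: "E * x = E * x * E" by (simp add: algebra_simps EE)
    show ?thesis using 1 2 by simp
  qed
  have pE: "p * E = E * p" using commE pp by blast
  have qE: "q * E = E * q" using commE qq by blast
  have pc: "p * c = - (p * q)" unfolding c_def by (simp add: algebra_simps pp)
  have cq: "c * q = - (p * q)" unfolding c_def by (simp add: algebra_simps qq)
  define t where "t = - (q * b * p)"
  have pqbpq: "p * q * b * (p * q) = - (p * q)"
  proof -
    have "p * q * b * (p * q) = (p * c) * b * (c * q)" unfolding pc cq by simp
    also have "\<dots> = p * (c * b * c) * q" by (simp add: mult.assoc)
    also have "\<dots> = - (p * q)" unfolding b1 using cq by (simp add: mult.assoc proj_mult[OF pp])
    finally show ?thesis .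
  qed
  have m1: "p * q * t * (p * q) = p * q"
  proof -
    have "p * q * t * (p * q) = - (p * (q * q) * b * (p * p) * q)" unfolding t_def by (simp add: mult.assoc)
    also have "\<dots> = p * q" using pqbpq by (simp add: pp qq mult.assoc)
    finally show ?thesis .
  qed
  have m2: "t * (p * q) * t = t"
  proof -
    have "t * (p * q) * t = q * b * (p * p) * (q * q) * b * p" unfolding t_def by (simp add: mult.assoc)
    also have "\<dots> = q * b * (p * q) * b * p" using pp qq by (simp add: mult.assoc)
    also have "\<dots> = q * b * (- (c * q)) * b * p" using cq by simp
    also have "\<dots> = - (q * (b * c) * q * b * p)" by (simp add: mult.assoc)
    also have "\<dots> = - (q * (E * q) * b * p)" unfolding bcE by (simp add: mult.assoc)
    also have "\<dots> = - (q * (q * E) * b * p)" unfolding qE by simp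
    also have "\<dots> = - ((q * q) * (E * b) * p)" by (simp add: mult.assoc)
    also have "\<dots> = t" unfolding t_def Eb qq by simp
    finally show ?thesis .
  qed
  have dt: "p * q * t = E * p"
  proof -
    have "p * q * t = - (p * (q * q) * b * p)" unfolding t_def by (simp add: mult.assoc)
    also have "\<dots> = p * (c * b) * p" using pc qq by (simp add: mult.assoc[symmetric])
    also have "\<dots> = E * p" unfolding E_def[symmetric] pE by (simp add: mult.assoc pp)
    finally show ?thesis .
  qed
  have td: "t * (p * q) = E * q"
  proof -
    have "t * (p * q) = - (q * b * (p * p) * q)" unfolding t_def by (simp add: mult.assoc)
    also have "\<dots> = q * (b * c) * q" using cq pp by (simp add: mult.assoc)
    also have "\<dots> = E * q" unfolding bcE qE by (simp add: mult.assoc qq)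
    finally show ?thesis .
  qed
  have s1: "st (p * q * t) = p * q * t" unfolding dt using S sE sp pE by simp
  have s2: "st (t * (p * q)) = t * (p * q)" unfolding td using S sE sq qE by simp
  show ?thesis unfolding MP_invertible_def using m1 m2 s1 s2 by blast
qed

theorem lemma2p10:
  fixes st :: "'a::ring_1 \<Rightarrow> 'a" and p q :: 'a
  assumes "involution st" and "star_reducing st"
    and "projection st p" and "projection st q"
  shows "(MP_invertible st ((1 - p) * (1 - q)) \<longleftrightarrow> MP_invertible st (1 - p - q))
       \<and> (MP_invertible st (1 - p - q) \<longleftrightarrow> MP_invertible st (p * q))"
proof -
  note S = inv_facts[OF assms(1)]
  have P': "projection st (1 - p)" using assms(3) unfolding projection_def S(7) S(5)
    by (simp add: algebra_simps)
  have Q': "projection st (1 - q)" using assms(4) unfolding projection_def S(7) S(5)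
    by (simp add: algebra_simps)
  have e1: "1 - (1 - p) - (1 - q) = - (1 - p - q)" by (simp add: algebra_simps)
  have A: "MP_invertible st (1 - p - q) \<longleftrightarrow> MP_invertible st (p * q)"
    using dir23[OF assms(1,3,4)] dir32[OF assms(1,3,4)] by blast
  have B: "MP_invertible st (1 - (1 - p) - (1 - q)) \<longleftrightarrow> MP_invertible st ((1 - p) * (1 - q))"
    using dir23[OF assms(1) P' Q'] dir32[OF assms(1) P' Q'] by blast
  show ?thesis using A B unfolding e1 MP_neg_iff[OF assms(1)] by blast
qed

end
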